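(* Let $Q$ be a measure on a measurable space $\mathcal{X}$, let $\beta>0$, and let $l,\tilde l:\mathcal{X}\to\mathbb{R}$ be measurable functions such that $0<\int e^{-\beta l}\,dQ<\infty$ and $0<\int e^{-\beta\tilde l}\,dQ<\infty$. Let $P(dx)\propto Q(dx)e^{-\beta l(x)}$ and $\tilde P(dx)\propto Q(dx)e^{-\beta\tilde l(x)}$ be the corresponding Gibbs probability measures. If $\sup_{x}|l(x)-\tilde l(x)|\le\epsilon$, then \[ D_{\mathrm{KL}}(P\|\tilde P)\le2\beta\epsilon\cdot\left\{1\wedge\left(e^{2\beta\epsilon}-1\right)\right\}. \]
   Context: $D_{\mathrm{KL}}$ denotes the Kullback–Leibler divergence (natural logarithm) and $a\wedge b=\min(a,b)$. *)

theory Defs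
  imports "HOL-Probability.Probability"
begin

definition gibbs :: "'a measure \<Rightarrow> real \<Rightarrow> ('a \<Rightarrow> real) \<Rightarrow> 'a measure" where
  "gibbs Q \<beta> l = density Q (\<lambda>x. ennreal (exp (- \<beta> * l x)) /
                     (\<integral>\<^sup>+ y. ennreal (exp (- \<beta> * l y)) \<partial>Q))"

text \<open>KL divergence with natural log; note the library's KL_divergence b M N is D(N || M).\<close>
definition DKL :: "'a measure \<Rightarrow> 'a measure \<Rightarrow> real" where
  "DKL P P' = KL_divergence (exp 1) P' P"

end

theory Submission
  imports Defs
begin

lemma pointwise_bd:
  fixes a h :: real
  assumes "0 \<le> a" "\<bar>h\<bar> \<le> a"
  shows "h + exp (- h) - 1 \<le> a * (exp a - 1)"
proof -
  have e1: "exp (- h) - 1 \<le> - h * exp (- h)"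
  proof -
    have "exp (-h) * (1 + h) \<le> exp (-h) * exp h"
      by (rule mult_left_mono) auto
    moreover have "exp (-h) * exp h = 1" by (simp add: exp_add[symmetric])
    ultimately show ?thesis by (simp add: algebra_simps)
  qed
  have "h + exp (- h) - 1 \<le> h * (1 - exp (- h))" using e1 by (simp add: algebra_simps)
  also have "\<dots> \<le> a * (exp a - 1)"
  proof (cases "h \<ge> 0")
    case True
    have "1 - exp (- h) \<le> exp a - 1"
    proof -
      have "1 - exp (-h) \<le> 1 - exp (-a)" using assms by simp
      moreover have "1 - exp (-a) \<le> exp a - 1"
        using exp_ge_add_one_self[of a] exp_ge_add_one_self[of "-a"] assms
        by (smt (verit) exp_ge_zero exp_minus_inverse mult_le_one mult_mono)
      ultimately show ?thesis by linarith
    qed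
    moreover have "0 \<le> 1 - exp (-h)" using True by simp
    ultimately show ?thesis using True assms by (intro mult_mono) auto
  next
    case False
    have "h * (1 - exp (- h)) = (-h) * (exp (-h) - 1)" by (simp add: algebra_simps)
    also have "\<dots> \<le> a * (exp a - 1)" using False assms by (intro mult_mono) auto
    finally show ?thesis .
  qed
  finally show ?thesis .
qed

lemma final_bd:
  fixes a :: real
  assumes "0 \<le> a"
  shows "a * (exp a - 1) \<le> 2 * a * (exp (2 * a) - 1)"
proof -
  have "exp a - 1 \<le> exp (2*a) - 1" using assms by simp
  moreover have "0 \<le> exp a - 1" using assms by simp
  ultimately have "a * (exp a - 1) \<le> a * (exp (2*a) - 1)" using assms by (intro mult_left_mono) auto
  also have "\<dots> \<le> 2 * a * (exp (2 * a) - 1)" using assms \<open>0 \<le> exp a - 1\<close> \<open>exp a - 1 \<le> exp (2*a) - 1\<close>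
    by (simp add: mult_right_mono)
  finally show ?thesis .
qed


theorem lemma17:
  fixes Q :: "'a measure" and \<beta> \<epsilon> :: real and l lt :: "'a \<Rightarrow> real"
  assumes "\<beta> > 0"
    and "l \<in> borel_measurable Q" and "lt \<in> borel_measurable Q"
    and "0 < (\<integral>\<^sup>+ x. ennreal (exp (- \<beta> * l x)) \<partial>Q)"
    and "(\<integral>\<^sup>+ x. ennreal (exp (- \<beta> * l x)) \<partial>Q) < \<infinity>"
    and "0 < (\<integral>\<^sup>+ x. ennreal (exp (- \<beta> * lt x)) \<partial>Q)"
    and "(\<integral>\<^sup>+ x. ennreal (exp (- \<beta> * lt x)) \<partial>Q) < \<infinity>"
    and "\<forall>x\<in>space Q. \<bar>l x - lt x\<bar> \<le> \<epsilon>"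
  shows "DKL (gibbs Q \<beta> l) (gibbs Q \<beta> lt)
           \<le> 2 * \<beta> * \<epsilon> * min 1 (exp (2 * \<beta> * \<epsilon>) - 1)"
proof -
  note [measurable] = assms(2,3)
  define Z where "Z = (\<integral>\<^sup>+ x. ennreal (exp (- \<beta> * l x)) \<partial>Q)"
  define Zt where "Zt = (\<integral>\<^sup>+ x. ennreal (exp (- \<beta> * lt x)) \<partial>Q)"
  define z where "z = enn2real Z"
  define zt where "zt = enn2real Zt"
  have Zz: "Z = ennreal z" using assms(5) by (simp add: z_def Z_def)
  have Zzt: "Zt = ennreal zt" using assms(7) by (simp add: zt_def Zt_def)
  have z_pos: "0 < z" using assms(4) Zz unfolding Z_def by simp
  have zt_pos: "0 < zt" using assms(6) Zzt unfolding Zt_def by simp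
  define p where "p x = exp (- \<beta> * l x) / z" for x
  define pt where "pt x = exp (- \<beta> * lt x) / zt" for x
  have p_pos: "0 < p x" for x using z_pos by (simp add: p_def)
  have pt_pos: "0 < pt x" for x using zt_pos by (simp add: pt_def)
  have [measurable]: "p \<in> borel_measurable Q" unfolding p_def by measurable
  have [measurable]: "pt \<in> borel_measurable Q" unfolding pt_def by measurable
  have G1: "gibbs Q \<beta> l = density Q (\<lambda>x. ennreal (p x))"
    unfolding gibbs_def Z_def[symmetric] Zz p_def using z_pos by (simp add: divide_ennreal)
  have G2: "gibbs Q \<beta> lt = density Q (\<lambda>x. ennreal (pt x))"
    unfolding gibbs_def Zt_def[symmetric] Zzt pt_def using zt_pos by (simp add: divide_ennreal)
  define P where "P = density Q (\<lambda>x. ennreal (p x))"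
  have spP: "space P = space Q" by (simp add: P_def)
  have probP: "prob_space P"
  proof (rule prob_spaceI)
    have "emeasure P (space P) = (\<integral>\<^sup>+ x. ennreal (p x) \<partial>Q)"
      unfolding P_def by (simp add: emeasure_density)
    also have "\<dots> = (\<integral>\<^sup>+ x. ennreal (exp (- \<beta> * l x)) * ennreal (1 / z) \<partial>Q)"
      using z_pos by (simp add: p_def ennreal_mult[symmetric])
    also have "\<dots> = Z * ennreal (1 / z)" unfolding Z_def by (rule nn_integral_multc) measurable
    also have "\<dots> = 1" using z_pos by (simp add: Zz ennreal_mult[symmetric])
    finally show "emeasure P (space P) = 1" .
  qed
  interpret P: prob_space P by (rule probP)
  define r where "r x = pt x / p x" for x
  have [measurable]: "r \<in> borel_measurable Q" unfolding r_def by measurable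
  have [measurable]: "r \<in> borel_measurable P" unfolding P_def by simp
  have r_pos: "0 < r x" for x using p_pos pt_pos by (simp add: r_def)
  have r_ne: "r x \<noteq> 0" for x using r_pos[of x] by simp
  have Pt: "gibbs Q \<beta> lt = density P (\<lambda>x. ennreal (r x))"
  proof -
    have "density P (\<lambda>x. ennreal (r x)) = density Q (\<lambda>x. ennreal (p x) * ennreal (r x))"
      unfolding P_def by (rule density_density_eq) (auto simp: P_def[symmetric])
    also have "(\<lambda>x. ennreal (p x) * ennreal (r x)) = (\<lambda>x. ennreal (pt x))"
    proof
      fix x
      have "ennreal (p x) * ennreal (r x) = ennreal (p x * r x)"
        using p_pos[of x] r_pos[of x] by (simp add: ennreal_mult)
      also have "p x * r x = pt x" using p_pos[of x] by (simp add: r_def)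
      finally show "ennreal (p x) * ennreal (r x) = ennreal (pt x)" .
    qed
    finally show ?thesis using G2 by simp
  qed
  define h where "h x = \<beta> * (lt x - l x)" for x
  define c where "c = ln (zt / z)"
  have [measurable]: "h \<in> borel_measurable Q" unfolding h_def by measurable
  have [measurable]: "h \<in> borel_measurable P" unfolding P_def by simp
  have lnr: "ln (1 / r x) = h x + c" for x
  proof -
    have ee: "exp (- (\<beta> * l x)) = exp (- (\<beta> * lt x)) * exp (\<beta> * lt x - \<beta> * l x)"
      by (simp add: mult_exp_exp)
    have "1 / r x = exp (h x) * (zt / z)"
      using z_pos zt_pos by (simp add: r_def p_def pt_def h_def field_simps ee)
    then have "ln (1 / r x) = ln (exp (h x) * (zt / z))" by simp
    also have "\<dots> = h x + c" using z_pos zt_pos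
      by (subst ln_mult) (auto simp: c_def)
    finally show ?thesis .
  qed
  have D: "DKL (gibbs Q \<beta> l) (gibbs Q \<beta> lt) = (\<integral>x. h x + c \<partial>P)"
  proof -
    have "DKL (gibbs Q \<beta> l) (gibbs Q \<beta> lt)
        = KL_divergence (exp 1) (density P (\<lambda>x. ennreal (r x))) (density P (\<lambda>x. ennreal 1))"
      unfolding DKL_def Pt G1 P_def[symmetric] by (simp add: density_1)
    also have "\<dots> = (\<integral>x. 1 * log (exp 1) (1 / r x) \<partial>P)"
      by (rule P.KL_density_density) (auto simp: less_imp_le r_pos r_ne)
    also have "\<dots> = (\<integral>x. h x + c \<partial>P)" by (simp add: log_def lnr)
    finally show ?thesis .
  qed
  obtain x0 where x0: "x0 \<in> space Q"
    using assms(4) nn_integral_empty[of Q] by fastforce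
  define a where "a = \<beta> * \<epsilon>"
  have hb: "\<bar>h x\<bar> \<le> a" if "x \<in> space P" for x
  proof -
    have "\<bar>h x\<bar> = \<beta> * \<bar>l x - lt x\<bar>" using assms(1) by (simp add: h_def abs_mult abs_minus_commute)
    also have "\<dots> \<le> \<beta> * \<epsilon>" using assms(1,8) that spP by (intro mult_left_mono) auto
    finally show ?thesis by (simp add: a_def)
  qed
  have a_nn: "0 \<le> a" using hb[of x0] x0 spP by simp
  have int_h: "integrable P h"
    by (rule P.integrable_const_bound[where B=a]) (auto intro!: AE_I2 hb)
  have int_e: "integrable P (\<lambda>x. exp (- h x))"
    by (rule P.integrable_const_bound[where B="exp a"]) (use hb in \<open>fastforce intro!: AE_I2 simp: abs_le_iff\<close>)+
  define m where "m = (\<integral>x. h x \<partial>P)"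
  define E where "E = (\<integral>x. exp (- h x) \<partial>P)"
  have E_eq: "E = zt / z"
  proof -
    have "E = (\<integral>x. p x * exp (- h x) \<partial>Q)"
      unfolding E_def P_def by (subst integral_density) (auto simp: less_imp_le p_pos)
    also have "\<dots> = (\<integral>x. exp (- \<beta> * lt x) / z \<partial>Q)"
      by (rule Bochner_Integration.integral_cong) (auto simp: p_def h_def mult_exp_exp algebra_simps)
    also have "\<dots> = (\<integral>x. exp (- \<beta> * lt x) \<partial>Q) / z" by simp
    also have "(\<integral>x. exp (- \<beta> * lt x) \<partial>Q) = zt"
      unfolding zt_def Zt_def by (rule integral_eq_nn_integral) auto
    finally show ?thesis .
  qed
  have E_pos: "0 < E" using E_eq z_pos zt_pos by simp
  have Dm: "DKL (gibbs Q \<beta> l) (gibbs Q \<beta> lt) = m + ln E"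
    unfolding D m_def E_eq c_def[symmetric] using int_h by (simp add: P.prob_space)
  have m_le: "m \<le> a"
  proof -
    have "m \<le> (\<integral>x. a \<partial>P)" unfolding m_def
      by (rule integral_mono) (use int_h hb in \<open>fastforce simp: abs_le_iff\<close>)+
    then show ?thesis by (simp add: P.prob_space)
  qed
  have E_le: "E \<le> exp a"
  proof -
    have "E \<le> (\<integral>x. exp a \<partial>P)" unfolding E_def
      by (rule integral_mono) (use int_e hb in \<open>fastforce simp: abs_le_iff\<close>)+
    then show ?thesis by (simp add: P.prob_space)
  qed
  have lnE1: "ln E \<le> a" using E_le E_pos by (metis ln_exp ln_le_cancel_iff exp_gt_zero)
  have lnE2: "ln E \<le> E - 1" using E_pos by (rule ln_le_minus_one)
  have B1: "m + ln E \<le> 2 * a" using m_le lnE1 by simp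
  have "m + E - 1 = (\<integral>x. h x + exp (- h x) - 1 \<partial>P)"
    unfolding m_def E_def using int_h int_e by (simp add: P.prob_space)
  also have "\<dots> \<le> (\<integral>x. a * (exp a - 1) \<partial>P)"
    by (rule integral_mono) (use int_h int_e hb pointwise_bd a_nn in auto)
  also have "\<dots> = a * (exp a - 1)" by (simp add: P.prob_space)
  finally have "m + ln E \<le> a * (exp a - 1)" using lnE2 by simp
  then have B2: "m + ln E \<le> 2 * a * (exp (2 * a) - 1)" using final_bd[OF a_nn] by simp
  have "m + ln E \<le> 2 * a * min 1 (exp (2 * a) - 1)"
    using B1 B2 by (simp add: min_def)
  then show ?thesis unfolding Dm a_def by (simp add: mult.assoc)
qed

end
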